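(* Let $v_1,\dots,v_n\geq 2$ be integers and let $Q$ be the $n\times n$ tridiagonal matrix with diagonal entries $-v_1,\dots,-v_n$ and all super- and sub-diagonal entries equal to $1$. Let $f:\mathbb{R}^n\to\mathbb{R}$, $f(z)=z^TQ^{-1}z$, and let $y=(2-v_1,\dots,2-v_n)$. If $x\in\mathbb{R}^n$ satisfies $|x_i|\leq|y_i|$ for all $i$ with strict inequality for at least one $i$, then $f(x)>f(y)$. *)

theory Defs
  imports "HOL-Analysis.Analysis"
begin

text \<open>Indices range over a finite linearly ordered type 'n (order-isomorphic to {1..n}).
  Two indices are adjacent iff one is the immediate successor of the other.\<close>
definition adjacent :: "'n::linorder \<Rightarrow> 'n \<Rightarrow> bool" where
  "adjacent i j \<longleftrightarrow> (i < j \<and> \<not> (\<exists>k. i < k \<and> k < j)) \<or> (j < i \<and> \<not> (\<exists>k. j < k \<and> k < i))"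

definition tridiag_Q :: "('n::{finite,linorder} \<Rightarrow> int) \<Rightarrow> real^'n::{finite,linorder}^'n::{finite,linorder}" where
  "tridiag_Q v = (\<chi> i j. if i = j then - real_of_int (v i) else if adjacent i j then 1 else 0)"

definition quadf :: "('n::{finite,linorder} \<Rightarrow> int) \<Rightarrow> real^'n::{finite,linorder} \<Rightarrow> real" where
  "quadf v z = z \<bullet> (matrix_inv (tridiag_Q v) *v z)"

definition yvec :: "('n::{finite,linorder} \<Rightarrow> int) \<Rightarrow> real^'n::{finite,linorder}" where
  "yvec v = (\<chi> i. 2 - real_of_int (v i))"

end

theory Submission
  imports Defs
begin

lemma adjacent_sym: "adjacent i j = adjacent j i"
  unfolding adjacent_def by auto

lemma adjacent_irrefl: "\<not> adjacent i i"
  unfolding adjacent_def by auto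

lemma Q_entry: "tridiag_Q v $ i $ j = (if adjacent i j then 1 else 0) - (if i = j then real_of_int (v i) else 0)"
  unfolding tridiag_Q_def using adjacent_irrefl[of i] by auto

lemma succ_le1:
  fixes i :: "'n::{finite,linorder}"
  shows "card {j. i < j \<and> \<not> (\<exists>k. i < k \<and> k < j)} \<le> 1"
proof -
  have "\<forall>a\<in>{j. i < j \<and> \<not> (\<exists>k. i < k \<and> k < j)}. \<forall>b\<in>{j. i < j \<and> \<not> (\<exists>k. i < k \<and> k < j)}. a = b"
    by (metis (mono_tags, lifting) mem_Collect_eq linorder_neqE)
  then show ?thesis using card_le_Suc0_iff_eq[of "{j. i < j \<and> \<not> (\<exists>k. i < k \<and> k < j)}"] by simp
qed

lemma pred_le1:
  fixes i :: "'n::{finite,linorder}"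
  shows "card {j. j < i \<and> \<not> (\<exists>k. j < k \<and> k < i)} \<le> 1"
proof -
  have "\<forall>a\<in>{j. j < i \<and> \<not> (\<exists>k. j < k \<and> k < i)}. \<forall>b\<in>{j. j < i \<and> \<not> (\<exists>k. j < k \<and> k < i)}. a = b"
    by (metis (mono_tags, lifting) mem_Collect_eq linorder_neqE)
  then show ?thesis using card_le_Suc0_iff_eq[of "{j. j < i \<and> \<not> (\<exists>k. j < k \<and> k < i)}"] by simp
qed

lemma deg_eq:
  fixes i :: "'n::{finite,linorder}"
  shows "(\<Sum>j\<in>UNIV. (if adjacent i j then 1 else 0::real)) = real (card {j. adjacent i j})"
  by (simp add: sum.If_cases)

lemma adj_split:
  fixes i :: "'n::{finite,linorder}"
  shows "{j. adjacent i j} = {j. i < j \<and> \<not> (\<exists>k. i < k \<and> k < j)} \<union> {j. j < i \<and> \<not> (\<exists>k. j < k \<and> k < i)}"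
  unfolding adjacent_def by auto

lemma deg_le2:
  fixes i :: "'n::{finite,linorder}"
  shows "(\<Sum>j\<in>UNIV. (if adjacent i j then 1 else 0::real)) \<le> 2"
proof -
  have "card {j. adjacent i j} \<le> 2"
    unfolding adj_split using card_Un_le[of "{j. i < j \<and> \<not> (\<exists>k. i < k \<and> k < j)}" "{j. j < i \<and> \<not> (\<exists>k. j < k \<and> k < i)}"]
      succ_le1[of i] pred_le1[of i] by linarith
  then show ?thesis unfolding deg_eq by simp
qed

lemma deg_le1:
  fixes i :: "'n::{finite,linorder}"
  assumes "\<forall>p. p < i \<longrightarrow> \<not> adjacent p i"
  shows "(\<Sum>j\<in>UNIV. (if adjacent i j then 1 else 0::real)) \<le> 1"
proof -
  have e: "{j. j < i \<and> \<not> (\<exists>k. j < k \<and> k < i)} = {}"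
    using assms unfolding adjacent_def by auto
  have "card {j. adjacent i j} \<le> 1"
    unfolding adj_split e using succ_le1[of i] by simp
  then show ?thesis unfolding deg_eq by simp
qed

lemma has_pred:
  fixes i :: "'n::{finite,linorder}"
  assumes "\<exists>k. k < i"
  shows "\<exists>p. p < i \<and> adjacent p i"
proof -
  let ?S = "{k. k < i}"
  have ne: "?S \<noteq> {}" using assms by auto
  have fin: "finite ?S" by simp
  define p where "p = Max ?S"
  have "p \<in> ?S" unfolding p_def using Max_in[OF fin ne] .
  moreover have "\<And>k. k < i \<Longrightarrow> k \<le> p" unfolding p_def using Max_ge[OF fin] by auto
  ultimately show ?thesis unfolding adjacent_def by (intro exI[of _ p]) force
qed

definition adjr :: "'n::linorder \<Rightarrow> 'n \<Rightarrow> real" where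
  "adjr i j = (if adjacent i j then 1 else 0)"

definition Pf :: "('n::{finite,linorder} \<Rightarrow> int) \<Rightarrow> real^'n::{finite,linorder} \<Rightarrow> real" where
  "Pf v w = w \<bullet> (tridiag_Q v *v w)"

lemma Pf_expand:
  "Pf v w = (\<Sum>i\<in>UNIV. \<Sum>j\<in>UNIV. adjr i j * w$i * w$j) - (\<Sum>i\<in>UNIV. real_of_int (v i) * (w$i)^2)"
proof -
  have "Pf v w = (\<Sum>i\<in>UNIV. w$i * (\<Sum>j\<in>UNIV. (adjr i j - (if i = j then real_of_int (v i) else 0)) * w$j))"
    unfolding Pf_def inner_vec_def matrix_vector_mult_def Q_entry adjr_def by simp
  also have "\<dots> = (\<Sum>i\<in>UNIV. (\<Sum>j\<in>UNIV. adjr i j * w$i * w$j) - real_of_int (v i) * (w$i)^2)"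
  proof (rule sum.cong[OF refl])
    fix i
    have "(\<Sum>j\<in>UNIV. (adjr i j - (if i = j then real_of_int (v i) else 0)) * w$j)
        = (\<Sum>j\<in>UNIV. adjr i j * w$j) - (\<Sum>j\<in>UNIV. (if i = j then real_of_int (v i) else 0) * w$j)"
      by (simp add: left_diff_distrib sum_subtractf)
    also have "\<dots> = (\<Sum>j\<in>UNIV. adjr i j * w$j) - real_of_int (v i) * w$i"
    proof -
      have "(\<Sum>j\<in>UNIV. (if i = j then real_of_int (v i) else 0) * w$j)
          = (\<Sum>j\<in>UNIV. (if i = j then real_of_int (v i) * w$i else 0))"
        by (rule sum.cong) auto
      then show ?thesis by (simp del: mult_if_delta)
    qed
    finally show "w$i * (\<Sum>j\<in>UNIV. (adjr i j - (if i = j then real_of_int (v i) else 0)) * w$j)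
        = (\<Sum>j\<in>UNIV. adjr i j * w$i * w$j) - real_of_int (v i) * (w$i)^2"
      by (simp add: right_diff_distrib sum_distrib_left power2_eq_square mult_ac)
  qed
  finally show ?thesis by (simp add: sum_subtractf)
qed

lemma adjr_sym: "adjr i j = adjr j i"
  unfolding adjr_def using adjacent_sym by metis

lemma adjr_nonneg: "adjr i j \<ge> 0"
  unfolding adjr_def by simp

lemma Pf_identity:
  fixes w :: "real^'n::{finite,linorder}"
  shows "Pf v w = - (\<Sum>i\<in>UNIV. (real_of_int (v i) - (\<Sum>j\<in>UNIV. adjr i j)) * (w$i)^2)
      - (\<Sum>i\<in>UNIV. \<Sum>j\<in>UNIV. adjr i j * (w$i - w$j)^2) / 2"
proof -
  have h1: "(\<Sum>i\<in>UNIV. \<Sum>j\<in>UNIV. adjr i j * (w$i - w$j)^2) =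
     (\<Sum>i\<in>UNIV. \<Sum>j\<in>UNIV. adjr i j * (w$i)^2) + (\<Sum>i\<in>UNIV. \<Sum>j\<in>UNIV. adjr i j * (w$j)^2)
     - 2 * (\<Sum>i\<in>UNIV. \<Sum>j\<in>UNIV. adjr i j * w$i * w$j)"
    by (simp add: power2_diff algebra_simps sum.distrib sum_subtractf sum_distrib_left)
  have h2: "(\<Sum>i\<in>UNIV. \<Sum>j\<in>UNIV. adjr i j * (w$j)^2) = (\<Sum>i\<in>UNIV. \<Sum>j\<in>UNIV. adjr i j * (w$i)^2)"
    by (subst sum.swap) (simp add: adjr_sym)
  have h3: "(\<Sum>i\<in>UNIV. \<Sum>j\<in>UNIV. adjr i j * (w$i)^2) = (\<Sum>i\<in>UNIV. (\<Sum>j\<in>UNIV. adjr i j) * (w$i)^2)"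
    by (simp add: sum_distrib_right)
  have h4: "(\<Sum>i\<in>UNIV. (real_of_int (v i) - (\<Sum>j\<in>UNIV. adjr i j)) * (w$i)^2)
     = (\<Sum>i\<in>UNIV. real_of_int (v i) * (w$i)^2) - (\<Sum>i\<in>UNIV. (\<Sum>j\<in>UNIV. adjr i j) * (w$i)^2)"
    by (simp add: left_diff_distrib sum_subtractf)
  show ?thesis unfolding Pf_expand h4 h3[symmetric] using h1 h2 by linarith
qed

lemma Pf_neg:
  fixes w :: "real^'n::{finite,linorder}"
  assumes v2: "\<forall>i. v i \<ge> 2" and wne: "w \<noteq> 0"
  shows "Pf v w < 0"
proof -
  define S1 where "S1 = (\<Sum>i\<in>UNIV. (real_of_int (v i) - (\<Sum>j\<in>UNIV. adjr i j)) * (w$i)^2)"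
  define S2 where "S2 = (\<Sum>i\<in>UNIV. \<Sum>j\<in>UNIV. adjr i j * (w$i - w$j)^2)"
  have P: "Pf v w = - S1 - S2 / 2" unfolding S1_def S2_def by (rule Pf_identity)
  have t1: "0 \<le> (real_of_int (v i) - (\<Sum>j\<in>UNIV. adjr i j)) * (w$i)^2" for i
  proof -
    have "(\<Sum>j\<in>UNIV. adjr i j) \<le> 2" using deg_le2[of i] unfolding adjr_def .
    moreover have "real_of_int (v i) \<ge> 2" using v2 by simp
    ultimately show ?thesis by simp
  qed
  have t2: "0 \<le> (\<Sum>j\<in>UNIV. adjr i j * (w$i - w$j)^2)" for i
    by (intro sum_nonneg mult_nonneg_nonneg adjr_nonneg) simp
  have S1nn: "S1 \<ge> 0" unfolding S1_def by (intro sum_nonneg t1)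
  have S2nn: "S2 \<ge> 0" unfolding S2_def by (intro sum_nonneg t2)
  let ?Z = "{i. w$i \<noteq> 0}"
  have Zne: "?Z \<noteq> {}" using wne by (auto simp: vec_eq_iff)
  define i0 where "i0 = Min ?Z"
  have i0Z: "w$i0 \<noteq> 0" unfolding i0_def using Min_in[OF _ Zne] by auto
  have i0min: "\<And>k. w$k \<noteq> 0 \<Longrightarrow> i0 \<le> k" unfolding i0_def by (simp add: Min_le)
  have "S1 > 0 \<or> S2 > 0"
  proof (cases "\<exists>k. k < i0")
    case True
    then obtain p where p: "p < i0" "adjacent p i0" using has_pred by blast
    have wp: "w$p = 0" using i0min p(1) by force
    have "0 < adjr p i0 * (w$p - w$i0)^2" using p(2) wp i0Z by (simp add: adjr_def)
    also have "\<dots> \<le> (\<Sum>j\<in>UNIV. adjr p j * (w$p - w$j)^2)"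
      by (rule member_le_sum) (auto intro: mult_nonneg_nonneg adjr_nonneg)
    also have "\<dots> \<le> S2" unfolding S2_def by (rule member_le_sum) (auto intro: t2)
    finally show ?thesis by simp
  next
    case False
    then have "(\<Sum>j\<in>UNIV. adjr i0 j) \<le> 1" using deg_le1[of i0] unfolding adjr_def by blast
    moreover have "real_of_int (v i0) \<ge> 2" using v2 by simp
    moreover have "(w$i0)^2 > 0" using i0Z by simp
    ultimately have "0 < (real_of_int (v i0) - (\<Sum>j\<in>UNIV. adjr i0 j)) * (w$i0)^2"
      by (intro mult_pos_pos) auto
    also have "\<dots> \<le> S1" unfolding S1_def by (rule member_le_sum) (auto intro: t1)
    finally show ?thesis by simp
  qed
  then show ?thesis using P S1nn S2nn by linarith
qed

lemma Q_sym: "tridiag_Q v $ i $ j = tridiag_Q v $ j $ i"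
  unfolding Q_entry using adjacent_sym[of i j] by auto

lemma Q_symm_inner:
  fixes a b :: "real^'n::{finite,linorder}"
  shows "(tridiag_Q v *v a) \<bullet> b = a \<bullet> (tridiag_Q v *v b)"
proof -
  have "(tridiag_Q v *v a) \<bullet> b = (\<Sum>i\<in>UNIV. \<Sum>j\<in>UNIV. tridiag_Q v $ i $ j * a$j * b$i)"
    unfolding inner_vec_def matrix_vector_mult_def by (simp add: sum_distrib_left sum_distrib_right mult_ac)
  also have "\<dots> = (\<Sum>j\<in>UNIV. \<Sum>i\<in>UNIV. tridiag_Q v $ i $ j * a$j * b$i)"
    by (rule sum.swap)
  also have "\<dots> = (\<Sum>j\<in>UNIV. \<Sum>i\<in>UNIV. tridiag_Q v $ j $ i * a$j * b$i)"
    by (rule sum.cong[OF refl], rule sum.cong[OF refl], subst Q_sym, rule refl)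
  also have "\<dots> = a \<bullet> (tridiag_Q v *v b)"
    unfolding inner_vec_def matrix_vector_mult_def by (simp add: sum_distrib_left mult_ac)
  finally show ?thesis .
qed

lemma Q_inv_right:
  fixes v :: "'n::{finite,linorder} \<Rightarrow> int"
  assumes v2: "\<forall>i. v i \<ge> 2"
  shows "tridiag_Q v ** matrix_inv (tridiag_Q v) = mat 1"
proof -
  have "\<forall>x. tridiag_Q v *v x = 0 \<longrightarrow> x = 0"
  proof (intro allI impI)
    fix x assume "tridiag_Q v *v x = 0"
    then have "Pf v x = 0" unfolding Pf_def by simp
    then show "x = 0" using Pf_neg[OF v2, of x] by fastforce
  qed
  then have "invertible (tridiag_Q v)"
    unfolding invertible_left_inverse matrix_left_invertible_ker .
  then have "\<exists>A'. tridiag_Q v ** A' = mat 1 \<and> A' ** tridiag_Q v = mat 1"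
    unfolding invertible_def .
  then show ?thesis unfolding matrix_inv_def by (rule someI2_ex) auto
qed

lemma Q_K:
  assumes v2: "\<forall>i. v i \<ge> 2"
  shows "tridiag_Q v *v (matrix_inv (tridiag_Q v) *v z) = z"
  by (simp add: matrix_vector_mul_assoc Q_inv_right[OF v2])

lemma quadf_Pf:
  assumes v2: "\<forall>i. v i \<ge> 2"
  shows "quadf v z = Pf v (matrix_inv (tridiag_Q v) *v z)"
  unfolding quadf_def Pf_def Q_K[OF v2] by (simp add: inner_commute)

lemma Pf_add:
  "Pf v (a + b) = Pf v a + 2 * ((tridiag_Q v *v a) \<bullet> b) + Pf v b"
proof -
  have "Pf v (a+b) = a \<bullet> (tridiag_Q v *v a) + a \<bullet> (tridiag_Q v *v b) + (b \<bullet> (tridiag_Q v *v a) + b \<bullet> (tridiag_Q v *v b))"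
    unfolding Pf_def by (simp only: matrix_vector_right_distrib inner_add_left inner_add_right)
  then show ?thesis using Q_symm_inner[of v a b] inner_commute[of b "tridiag_Q v *v a"]
    unfolding Pf_def by linarith
qed

lemma quadf_upper:
  assumes v2: "\<forall>i. v i \<ge> 2"
  shows "quadf v z \<le> - 2 * (z \<bullet> w) - Pf v w"
proof -
  define u where "u = matrix_inv (tridiag_Q v) *v z"
  have Qu: "tridiag_Q v *v u = z" unfolding u_def by (rule Q_K[OF v2])
  have "Pf v (u + w) \<le> 0"
    using Pf_neg[OF v2, of "u+w"] by (cases "u + w = 0") (auto simp: Pf_def)
  then show ?thesis using Pf_add[of v u w] quadf_Pf[OF v2, of z] unfolding Qu u_def[symmetric]
    by linarith
qed

lemma Pf_abs:
  fixes u :: "real^'n::{finite,linorder}"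
  shows "Pf v u \<le> Pf v (\<chi> i. \<bar>u$i\<bar>)"
proof -
  have "(\<Sum>i\<in>UNIV. \<Sum>j\<in>UNIV. adjr i j * u$i * u$j) \<le> (\<Sum>i\<in>UNIV. \<Sum>j\<in>UNIV. adjr i j * \<bar>u$i\<bar> * \<bar>u$j\<bar>)"
  proof (intro sum_mono)
    fix i j
    have "u$i * u$j \<le> \<bar>u$i\<bar> * \<bar>u$j\<bar>" by (metis abs_ge_self abs_mult)
    then show "adjr i j * u$i * u$j \<le> adjr i j * \<bar>u$i\<bar> * \<bar>u$j\<bar>"
      using mult_left_mono[OF _ adjr_nonneg[of i j]] by (simp add: mult.assoc)
  qed
  moreover have "Pf v (\<chi> i. \<bar>u$i\<bar>) = (\<Sum>i\<in>UNIV. \<Sum>j\<in>UNIV. adjr i j * \<bar>u$i\<bar> * \<bar>u$j\<bar>) - (\<Sum>i\<in>UNIV. real_of_int (v i) * (u$i)^2)"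
    by (simp only: Pf_expand vec_lambda_beta power2_abs)
  ultimately show ?thesis unfolding Pf_expand[of v u] by linarith
qed

lemma quadf_neg: "quadf v (- z) = quadf v z"
  unfolding quadf_def by (simp only: vec.neg inner_minus_left inner_minus_right minus_minus)

lemma quadf_mono:
  fixes x a :: "real^'n::{finite,linorder}"
  assumes v2: "\<forall>i. v i \<ge> 2" and le: "\<forall>i. \<bar>x$i\<bar> \<le> a$i"
  shows "quadf v a \<le> quadf v x"
proof -
  define u where "u = matrix_inv (tridiag_Q v) *v x"
  have Qu: "tridiag_Q v *v u = x" unfolding u_def by (rule Q_K[OF v2])
  have q1: "quadf v x = Pf v u" unfolding u_def by (rule quadf_Pf[OF v2])
  have q2: "quadf v x = x \<bullet> u" unfolding quadf_def u_def by (rule refl)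
  have "- (a \<bullet> (\<chi> i. \<bar>u$i\<bar>)) \<le> x \<bullet> u"
  proof -
    have "(\<Sum>i\<in>UNIV. - (a$i * \<bar>u$i\<bar>)) \<le> (\<Sum>i\<in>UNIV. x$i * u$i)"
    proof (rule sum_mono)
      fix i
      have "\<bar>x$i\<bar> \<le> a$i" using le by blast
      then have "\<bar>x$i\<bar> * \<bar>u$i\<bar> \<le> a$i * \<bar>u$i\<bar>" by (rule mult_right_mono) simp
      moreover have "- (\<bar>x$i\<bar> * \<bar>u$i\<bar>) \<le> x$i * u$i" using abs_ge_minus_self[of "x$i * u$i"] by (simp add: abs_mult)
      ultimately show "- (a$i * \<bar>u$i\<bar>) \<le> x$i * u$i" by linarith
    qed
    moreover have "a \<bullet> (\<chi> i. \<bar>u$i\<bar>) = (\<Sum>i\<in>UNIV. a$i * \<bar>u$i\<bar>)"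
      by (simp add: inner_vec_def)
    moreover have "x \<bullet> u = (\<Sum>i\<in>UNIV. x$i * u$i)" by (simp add: inner_vec_def)
    ultimately show ?thesis by (simp add: sum_negf)
  qed
  moreover have "quadf v a \<le> - 2 * (a \<bullet> (\<chi> i. \<bar>u$i\<bar>)) - Pf v (\<chi> i. \<bar>u$i\<bar>)"
    by (rule quadf_upper[OF v2])
  moreover have "Pf v u \<le> Pf v (\<chi> i. \<bar>u$i\<bar>)" by (rule Pf_abs)
  ultimately show ?thesis using q1 q2 by linarith
qed

lemma quadf_line:
  "quadf v (p + r *\<^sub>R e) = quadf v p + r * (p \<bullet> (matrix_inv (tridiag_Q v) *v e) + e \<bullet> (matrix_inv (tridiag_Q v) *v p)) + r^2 * quadf v e"
  unfolding quadf_def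
  by (simp only: matrix_vector_right_distrib matrix_vector_mult_scaleR inner_add_left inner_add_right
      inner_scaleR_left inner_scaleR_right power2_eq_square algebra_simps)

lemma quadf_axis_neg:
  fixes v :: "'n::{finite,linorder} \<Rightarrow> int"
  assumes v2: "\<forall>i. v i \<ge> 2"
  shows "quadf v (axis j 1) < 0"
proof -
  define u where "u = matrix_inv (tridiag_Q v) *v (axis j (1::real))"
  have "tridiag_Q v *v u = axis j 1" unfolding u_def by (rule Q_K[OF v2])
  then have "u \<noteq> 0" by (auto simp: axis_eq_0_iff)
  then show ?thesis using quadf_Pf[OF v2, of "axis j 1"] Pf_neg[OF v2, of u] unfolding u_def by simp
qed

theorem proposition3p5:
  fixes v :: "'n::{finite,linorder} \<Rightarrow> int" and x :: "real^'n::{finite,linorder}"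
  assumes "\<forall>i. v i \<ge> 2"
    and "\<forall>i. \<bar>x $ i\<bar> \<le> \<bar>yvec v $ i\<bar>"
    and "\<exists>i. \<bar>x $ i\<bar> < \<bar>yvec v $ i\<bar>"
  shows "quadf v x > quadf v (yvec v)"
proof -
  note v2 = assms(1)
  define a where "a = (\<chi> i. \<bar>yvec v $ i\<bar>)"
  have ya: "yvec v = - a"
    unfolding a_def yvec_def using v2 by (auto simp: vec_eq_iff)
  have qy: "quadf v (yvec v) = quadf v a" unfolding ya by (rule quadf_neg)
  obtain j where j: "\<bar>x $ j\<bar> < \<bar>yvec v $ j\<bar>" using assms(3) by blast
  define s where "s = \<bar>x $ j\<bar>"
  define t where "t = \<bar>yvec v $ j\<bar>"
  have s0: "0 \<le> s" unfolding s_def by simp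
  have st: "s < t" unfolding s_def t_def using j .
  define p where "p = (\<chi> i. if i = j then 0 else a $ i)"
  define e where "e = (axis j (1::real) :: real^'n::{finite,linorder})"
  define \<phi> where "\<phi> r = quadf v (p + r *\<^sub>R e)" for r
  have comp: "(p + r *\<^sub>R e) $ i = (if i = j then r else \<bar>yvec v $ i\<bar>)" for r i
    unfolding p_def e_def a_def by (simp add: axis_def)
  have \<phi>t: "\<phi> t = quadf v a"
  proof -
    have "p + t *\<^sub>R e = a"
    proof (subst vec_eq_iff, intro allI)
      fix i show "(p + t *\<^sub>R e) $ i = a $ i" unfolding comp a_def t_def by simp
    qed
    then show ?thesis unfolding \<phi>_def by simp
  qed
  have \<phi>s: "\<phi> s \<le> quadf v x"
    unfolding \<phi>_def
  proof (rule quadf_mono[OF v2])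
    show "\<forall>i. \<bar>x $ i\<bar> \<le> (p + s *\<^sub>R e) $ i"
      unfolding comp s_def using assms(2) by simp
  qed
  have mono: "\<phi> r2 \<le> \<phi> r1" if "0 \<le> r1" "r1 \<le> r2" for r1 r2
    unfolding \<phi>_def
  proof (rule quadf_mono[OF v2])
    show "\<forall>i. \<bar>(p + r1 *\<^sub>R e) $ i\<bar> \<le> (p + r2 *\<^sub>R e) $ i"
      unfolding comp using that by auto
  qed
  define m where "m = (s + t) / 2"
  have m1: "s \<le> m" "m \<le> t" unfolding m_def using st by auto
  have \<phi>m: "\<phi> t \<le> \<phi> m" "\<phi> m \<le> \<phi> s"
    using mono[of m t] mono[of s m] m1 s0 by auto
  define A where "A = quadf v p"
  define B where "B = p \<bullet> (matrix_inv (tridiag_Q v) *v e) + e \<bullet> (matrix_inv (tridiag_Q v) *v p)"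
  define C where "C = quadf v e"
  have C: "C < 0" unfolding C_def e_def by (rule quadf_axis_neg[OF v2])
  have \<phi>f: "\<phi> r = A + r * B + r^2 * C" for r
    unfolding \<phi>_def A_def B_def C_def by (rule quadf_line)
  have "\<phi> s + \<phi> t - 2 * \<phi> m = C * (s - t)^2 / 2"
    unfolding \<phi>f m_def by (simp add: power2_eq_square field_simps)
  moreover have "C * (s - t)^2 / 2 < 0" using C st by (simp add: mult_neg_pos)
  ultimately have "\<phi> t < \<phi> s" using \<phi>m by linarith
  then show ?thesis using \<phi>s \<phi>t qy by linarith
qed

end
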